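(* Let $\mathsf{H}^\ast$ be a clique coverage of $\mathrm{G}$ with $|\mathsf{H}^\ast|=d$, and let $(\mathrm{Q}_1,\dots,\mathrm{Q}_d)$ be an ordering of $\mathsf{H}^\ast$ in which every clique of $\mathsf{H}^\ast$ appears exactly once. For each clique $\mathrm{C}\in\mathsf{H}^\ast$ let $\mathbf{M}_{\mathrm{C}}\in\mathbb{R}^{nb\times nb}$ be a clique-gossip matrix with arbitrary blocks $\mathbf{A}_{ij}(\mathrm{C})$. Put $\mathbf{F}=\mathbf{M}_{\mathrm{Q}_d}\cdots\mathbf{M}_{\mathrm{Q}_{s+1}}\mathbf{M}_{\mathrm{Q}_s}\cdots\mathbf{M}_{\mathrm{Q}_1}$ and, for $s\in\{1,\dots,d-1\}$, let $\mathbf{F}_{\pi_s}$ be the same product with the two factors $\mathbf{M}_{\mathrm{Q}_s}$ and $\mathbf{M}_{\mathrm{Q}_{s+1}}$ interchanged, i.e. $\mathbf{F}_{\pi_s}=\mathbf{M}_{\mathrm{Q}_d}\cdots\mathbf{M}_{\mathrm{Q}_{s+2}}\mathbf{M}_{\mathrm{Q}_s}\mathbf{M}_{\mathrm{Q}_{s+1}}\mathbf{M}_{\mathrm{Q}_{s-1}}\cdots\mathbf{M}_{\mathrm{Q}_1}$. If either (i) $\mathrm{Q}_s$ and $\mathrm{Q}_{s+1}$ are not adjacent, or (ii) $\mathrm{Q}_s$ and $\mathrm{Q}_{s+1}$ are adjacent but neither of them lies on any cycle of the generalized line graph $\mathcal{L}(\mathsf{H}^\ast)$, then $\mathbf{F}$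 and $\mathbf{F}_{\pi_s}$ have the same characteristic polynomial.
   Context: $\mathrm{G}=(\mathrm{V},\mathrm{E})$ is a simple undirected graph with $\mathrm{V}=\{1,\dots,n\}$; $\mathrm{G}[\mathrm{S}]$ is the induced subgraph on $\mathrm{S}\subset\mathrm{V}$. A clique is a subset $\mathrm{C}\subset\mathrm{V}$ with $\mathrm{G}[\mathrm{C}]$ complete. A clique coverage of $\mathrm{G}$ is a finite set $\mathsf{H}^\ast$ of cliques whose union is $\mathrm{V}$ and whose union graph $\bigcup_{\mathrm{C}\in\mathsf{H}^\ast}\mathrm{G}[\mathrm{C}]$ is connected. Two distinct cliques are adjacent if they intersect. The generalized line graph $\mathcal{L}(\mathsf{H}^\ast)$ has vertex set $\mathsf{H}^\ast$, with distinct $\mathrm{C},\mathrm{C}'$ joined iff $\mathrm{C}\cap\mathrm{C}'\neq\emptyset$; a cycle means a cycle in this graph in the usual graph-theoretic sense. Fix $b\ge1$. A clique-gossip matrix for a clique $\mathrm{C}$ is a block matrix $\mathbf{M}_{\mathrm{C}}\in\mathbb{R}^{nb\times nb}$ with $b\times b$ blocks, whose $(i,j)$ block equals an arbitrary matrix $\mathbf{A}_{ij}(\mathrm{C})\in\mathbb{R}^{b\times b}$ when $i,j\in\mathrm{C}$, equals $\mathbf{I}_b$ when $i=j\notin\mathrm{C}$, and equals $\mathbf{0}_b$ otherwise. (It represents the update $\mathbf{x}_i\mapsto\sum_{j\in\mathrm{C}}\mathbf{A}_{ij}(\mathrm{C})\mathbf{x}_j$ for $i\in\mathrm{C}$, $\mathbf{x}_i\mapsto\mathbf{x}_i$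 for $i\notin\mathrm{C}$.) *)

theory Defs
  imports "Jordan_Normal_Form.Char_Poly"
begin

definition simple_graph :: "nat \<Rightarrow> (nat \<Rightarrow> nat \<Rightarrow> bool) \<Rightarrow> bool" where
  "simple_graph n E \<longleftrightarrow> (\<forall>i j. E i j \<longrightarrow> i \<in> {1..n} \<and> j \<in> {1..n} \<and> i \<noteq> j \<and> E j i)"

definition is_clique :: "nat \<Rightarrow> (nat \<Rightarrow> nat \<Rightarrow> bool) \<Rightarrow> nat set \<Rightarrow> bool" where
  "is_clique n E C \<longleftrightarrow> C \<subseteq> {1..n} \<and> (\<forall>i\<in>C. \<forall>j\<in>C. i \<noteq> j \<longrightarrow> E i j)"

definition union_graph_edges :: "nat set set \<Rightarrow> (nat \<times> nat) set" where
  "union_graph_edges H = {(i, j). i \<noteq> j \<and> (\<exists>C\<in>H. i \<in> C \<and> j \<in> C)}"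

definition clique_coverage :: "nat \<Rightarrow> (nat \<Rightarrow> nat \<Rightarrow> bool) \<Rightarrow> nat set set \<Rightarrow> bool" where
  "clique_coverage n E H \<longleftrightarrow> finite H \<and> (\<forall>C\<in>H. is_clique n E C) \<and> \<Union>H = {1..n} \<and>
     (\<forall>u\<in>{1..n}. \<forall>v\<in>{1..n}. (u, v) \<in> (union_graph_edges H)\<^sup>*)"

definition adjacent_cliques :: "nat set \<Rightarrow> nat set \<Rightarrow> bool" where
  "adjacent_cliques C C' \<longleftrightarrow> C \<noteq> C' \<and> C \<inter> C' \<noteq> {}"

definition is_cycle_LG :: "nat set set \<Rightarrow> nat set list \<Rightarrow> bool" where
  "is_cycle_LG H cs \<longleftrightarrow> length cs \<ge> 3 \<and> distinct cs \<and> set cs \<subseteq> H \<and>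
     (\<forall>k < length cs. adjacent_cliques (cs ! k) (cs ! ((k + 1) mod length cs)))"

definition on_cycle_LG :: "nat set set \<Rightarrow> nat set \<Rightarrow> bool" where
  "on_cycle_LG H C \<longleftrightarrow> (\<exists>cs. is_cycle_LG H cs \<and> C \<in> set cs)"

text \<open>Clique-gossip matrix of size nb x nb with b x b blocks; vertex i in {1..n} owns
  rows/columns (i-1)*b .. i*b-1 (0-based). A C i j k l is entry (k,l) of block A_ij(C).\<close>
definition gossip_mat :: "nat \<Rightarrow> nat \<Rightarrow> (nat set \<Rightarrow> nat \<Rightarrow> nat \<Rightarrow> nat \<Rightarrow> nat \<Rightarrow> real)
     \<Rightarrow> nat set \<Rightarrow> real mat" where
  "gossip_mat n b A C = mat (n * b) (n * b) (\<lambda>(p, q).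
     let i = p div b + 1; k = p mod b; j = q div b + 1; l = q mod b in
     if i \<in> C \<and> j \<in> C then A C i j k l else if p = q then 1 else 0)"

text \<open>Product M_{Q_d} ... M_{Q_1} for Q = [Q_1, ..., Q_d].\<close>
definition gossip_prod :: "nat \<Rightarrow> nat \<Rightarrow> (nat set \<Rightarrow> nat \<Rightarrow> nat \<Rightarrow> nat \<Rightarrow> nat \<Rightarrow> real)
     \<Rightarrow> nat set list \<Rightarrow> real mat" where
  "gossip_prod n b A Q = foldl (\<lambda>P C. gossip_mat n b A C * P) (1\<^sub>m (n * b)) Q"

text \<open>Swap the (1-based) entries s and s+1 of a list.\<close>
definition swap_adj :: "nat \<Rightarrow> 'a list \<Rightarrow> 'a list" where
  "swap_adj s Q = Q[s - 1 := Q ! s, s := Q ! (s - 1)]"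

end

theory Submission
  imports Defs "HOL-Library.Transitive_Closure_Table"
begin


lemma cpm_four_block:
  fixes A :: "'a::comm_ring_1 mat"
  assumes A: "A \<in> carrier_mat n n" and C: "C \<in> carrier_mat m n" and D: "D \<in> carrier_mat m m"
  shows "char_poly_matrix (four_block_mat A (0\<^sub>m n m) C D) =
    four_block_mat (char_poly_matrix A) (0\<^sub>m n m) (map_mat (\<lambda>a. [:-a:]) C) (char_poly_matrix D)"
  by (rule eq_matI, insert A C D, auto simp: char_poly_matrix_def)

lemma cp_four_block:
  fixes A :: "'a::idom mat"
  assumes A: "A \<in> carrier_mat n n" and C: "C \<in> carrier_mat m n" and D: "D \<in> carrier_mat m m"
  shows "char_poly (four_block_mat A (0\<^sub>m n m) C D) = char_poly A * char_poly D"
  unfolding char_poly_def cpm_four_block[OF A C D]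
  by (rule det_four_block_mat_upper_right_zero, insert A C D, auto)

lemma char_poly_comm:
  fixes X Y :: "'a::idom mat"
  assumes X: "X \<in> carrier_mat N N" and Y: "Y \<in> carrier_mat N N"
  shows "char_poly (X * Y) = char_poly (Y * X)"
proof -
  let ?Z = "0\<^sub>m N N :: 'a mat"
  let ?I = "1\<^sub>m N :: 'a mat"
  let ?M1 = "four_block_mat (X * Y) ?Z Y ?Z"
  let ?M2 = "four_block_mat ?Z ?Z Y (Y * X)"
  let ?P = "four_block_mat ?I X ?Z ?I"
  let ?Q = "four_block_mat ?I (- X) ?Z ?I"
  have XY: "X * Y \<in> carrier_mat N N" "Y * X \<in> carrier_mat N N" using X Y by auto
  have PQ: "?P * ?Q = 1\<^sub>m (N+N)"
    apply (subst mult_four_block_mat[OF one_carrier_mat X zero_carrier_mat one_carrier_mat one_carrier_mat uminus_carrier_mat[OF X] zero_carrier_mat one_carrier_mat])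
    using X by (auto simp: four_block_one_mat[symmetric] simp del: four_block_one_mat)
  have QP: "?Q * ?P = 1\<^sub>m (N+N)"
    apply (subst mult_four_block_mat[OF one_carrier_mat uminus_carrier_mat[OF X] zero_carrier_mat one_carrier_mat one_carrier_mat X zero_carrier_mat one_carrier_mat])
    using X by (auto simp: four_block_one_mat[symmetric] simp del: four_block_one_mat)
  have PM2: "?P * ?M2 = four_block_mat (X * Y) (X * (Y * X)) Y (Y * X)"
    apply (subst mult_four_block_mat[OF one_carrier_mat X zero_carrier_mat one_carrier_mat zero_carrier_mat zero_carrier_mat Y XY(2)])
    using X Y XY by auto
  have "?P * ?M2 * ?Q = ?M1"
    unfolding PM2
    apply (subst mult_four_block_mat[OF XY(1) mult_carrier_mat[OF X XY(2)] Y XY(2) one_carrier_mat uminus_carrier_mat[OF X] zero_carrier_mat one_carrier_mat])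
    apply (rule cong_four_block_mat)
    using X Y XY
       apply (auto simp: assoc_mult_mat[of X N N Y N X N])
    done
  have sim: "similar_mat ?M1 ?M2"
    by (rule similar_matI[of ?M1 ?M2 ?P ?Q "N+N"], insert X Y XY PQ QP \<open>?P * ?M2 * ?Q = ?M1\<close>, auto)
  have "char_poly (X * Y) * char_poly ?Z = char_poly ?M1"
    using cp_four_block[OF XY(1) Y, of ?Z] by auto
  also have "\<dots> = char_poly ?M2" by (rule char_poly_similar[OF sim])
  also have "\<dots> = char_poly ?Z * char_poly (Y * X)"
    using cp_four_block[OF _ Y XY(2), of ?Z] by auto
  finally have e: "char_poly (X * Y) * char_poly ?Z = char_poly (Y * X) * char_poly ?Z" by (simp add: mult.commute)
  have "char_poly ?Z \<noteq> 0" using degree_monic_char_poly[of ?Z N] by auto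
  with e show ?thesis by simp
qed


lemma gm_carrier[simp]: "gossip_mat n b A C \<in> carrier_mat (n*b) (n*b)"
  by (simp add: gossip_mat_def)

lemma gm_dim[simp]: "dim_row (gossip_mat n b A C) = n*b" "dim_col (gossip_mat n b A C) = n*b"
  by (simp_all add: gossip_mat_def)

lemma assocN:
  assumes "dim_col (X::'a::semiring_0 mat) = dim_row Y" "dim_col Y = dim_row Z"
  shows "X * Y * Z = X * (Y * Z)"
proof -
  have "X \<in> carrier_mat (dim_row X) (dim_col X)" "Y \<in> carrier_mat (dim_col X) (dim_col Y)"
    "Z \<in> carrier_mat (dim_col Y) (dim_col Z)" using assms unfolding carrier_mat_def by simp_all
  thus ?thesis by (rule assoc_mult_mat)
qed

lemma gm_idrow: "p < n*b \<Longrightarrow> r < n*b \<Longrightarrow> p div b + 1 \<notin> C \<Longrightarrow>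
   gossip_mat n b A C $$ (p,r) = (if p = r then 1 else 0)"
  by (auto simp add: gossip_mat_def Let_def)

lemma gm_zero: "p < n*b \<Longrightarrow> r < n*b \<Longrightarrow> p div b + 1 \<in> C \<Longrightarrow> r div b + 1 \<notin> C \<Longrightarrow>
   gossip_mat n b A C $$ (p,r) = 0"
  by (auto simp add: gossip_mat_def Let_def)

lemma mult_idrow:
  fixes X Y :: "real mat"
  assumes X: "X \<in> carrier_mat N N" and Y: "Y \<in> carrier_mat N N" and p: "p < N" and q: "q < N"
    and row: "\<forall>r<N. X $$ (p,r) = (if p = r then 1 else 0)"
  shows "(X * Y) $$ (p,q) = Y $$ (p,q)"
proof -
  have "(X * Y) $$ (p,q) = (\<Sum>r\<in>{0..<N}. X $$ (p,r) * Y $$ (r,q))"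
    using X Y p q by (simp add: scalar_prod_def)
  also have "\<dots> = (\<Sum>r\<in>{0..<N}. (if p = r then Y $$ (r,q) else 0))"
    by (rule sum.cong, auto simp: row)
  also have "\<dots> = Y $$ (p,q)" using p by simp
  finally show ?thesis .
qed

lemma mult_idrow2:
  fixes X Y :: "real mat"
  assumes X: "X \<in> carrier_mat N N" and Y: "Y \<in> carrier_mat N N" and p: "p < N" and q: "q < N"
    and rows: "\<forall>r<N. X $$ (p,r) \<noteq> 0 \<longrightarrow> (\<forall>q<N. Y $$ (r,q) = (if r = q then 1 else 0))"
  shows "(X * Y) $$ (p,q) = X $$ (p,q)"
proof -
  have "(X * Y) $$ (p,q) = (\<Sum>r\<in>{0..<N}. X $$ (p,r) * Y $$ (r,q))"
    using X Y p q by (simp add: scalar_prod_def)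
  also have "\<dots> = (\<Sum>r\<in>{0..<N}. (if r = q then X $$ (p,r) else 0))"
    by (rule sum.cong, insert rows q, auto)
  also have "\<dots> = X $$ (p,q)" using q by simp
  finally show ?thesis .
qed

lemma gm_comm:
  assumes disj: "C \<inter> C' = {}"
  shows "gossip_mat n b A C * gossip_mat n b A C' = gossip_mat n b A C' * gossip_mat n b A C"
proof (rule eq_matI)
  let ?M = "gossip_mat n b A"
  fix p q assume p: "p < dim_row (?M C' * ?M C)" and q: "q < dim_col (?M C' * ?M C)"
  hence p: "p < n*b" and q: "q < n*b" by auto
  have gen: "(?M X * ?M Z) $$ (p,q) = ?M X $$ (p,q)" if "X \<inter> Z = {}" "p div b + 1 \<in> X" for X Z
  proof (rule mult_idrow2[OF gm_carrier gm_carrier p q], intro allI impI)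
    fix r q' assume r: "r < n*b" and nz: "?M X $$ (p,r) \<noteq> 0" and q': "q' < n*b"
    have "r div b + 1 \<in> X" using gm_zero[OF p r that(2)] nz by auto
    hence "r div b + 1 \<notin> Z" using that(1) by auto
    thus "?M Z $$ (r,q') = (if r = q' then 1 else 0)" using gm_idrow[OF r q'] by auto
  qed
  have gen2: "(?M X * ?M Z) $$ (p,q) = ?M Z $$ (p,q)" if "p div b + 1 \<notin> X" for X Z
    by (rule mult_idrow[OF gm_carrier gm_carrier p q], insert gm_idrow[OF p _ that], auto)
  show "(?M C * ?M C') $$ (p,q) = (?M C' * ?M C) $$ (p,q)"
  proof (cases "p div b + 1 \<in> C")
    case True
    hence "p div b + 1 \<notin> C'" using disj by auto
    then show ?thesis using gen[OF disj True] gen2[of C' C] by simp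
  next
    case F: False
    show ?thesis
    proof (cases "p div b + 1 \<in> C'")
      case True
      have disj': "C' \<inter> C = {}" using disj by blast
      show ?thesis using gen[OF disj' True] gen2[OF F, of C'] by simp
    next
      case False
      then show ?thesis using gen2[OF F, of C'] gen2[OF False, of C] gm_idrow[OF p q F]
        gm_idrow[OF p q False] by simp
    qed
  qed
qed simp_all

fun prl :: "nat \<Rightarrow> nat \<Rightarrow> (nat set \<Rightarrow> nat \<Rightarrow> nat \<Rightarrow> nat \<Rightarrow> nat \<Rightarrow> real) \<Rightarrow> nat set list \<Rightarrow> real mat" where
  "prl n b A [] = 1\<^sub>m (n*b)"
| "prl n b A (x # xs) = prl n b A xs * gossip_mat n b A x"

lemma prl_carrier[simp]: "prl n b A l \<in> carrier_mat (n*b) (n*b)"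
  by (induction l) auto

lemma prl_dim[simp]: "dim_row (prl n b A l) = n*b" "dim_col (prl n b A l) = n*b"
  by (induction l) simp_all

lemma foldl_prl: "X \<in> carrier_mat (n*b) (n*b) \<Longrightarrow>
  foldl (\<lambda>P C. gossip_mat n b A C * P) X l = prl n b A l * X"
proof (induction l arbitrary: X)
  case (Cons a l)
  have cX: "gossip_mat n b A a * X \<in> carrier_mat (n*b) (n*b)" using Cons.prems by auto
  have dX: "dim_row X = n*b" using Cons.prems by auto
  have "prl n b A l * gossip_mat n b A a * X = prl n b A l * (gossip_mat n b A a * X)"
    by (rule assoc_mult_mat[OF prl_carrier gm_carrier Cons.prems])
  with Cons.IH[OF cX] show ?case by (simp only: foldl_Cons prl.simps)
next
  case Nil
  have "X = 1\<^sub>m (n*b) * X" using Nil by (simp only: left_mult_one_mat)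
  then show ?case by (simp only: foldl_Nil prl.simps)
qed

lemma gp_prl: "gossip_prod n b A l = prl n b A l"
  unfolding gossip_prod_def by (simp add: foldl_prl)

lemma prl_append: "prl n b A (xs @ ys) = prl n b A ys * prl n b A xs"
  by (induction xs) (auto simp: assocN)

lemma prl_comm_mat:
  assumes "\<forall>c\<in>set l. gossip_mat n b A c * Z = Z * gossip_mat n b A c" "Z \<in> carrier_mat (n*b) (n*b)"
  shows "prl n b A l * Z = Z * prl n b A l"
  using assms
proof (induction l)
  case (Cons c l)
  have dZ: "dim_row Z = n*b" "dim_col Z = n*b" using Cons.prems by auto
  have "prl n b A (c # l) * Z = prl n b A l * (gossip_mat n b A c * Z)" using dZ by (simp add: assocN)
  also have "\<dots> = (prl n b A l * Z) * gossip_mat n b A c" using Cons.prems dZ by (simp add: assocN)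
  also have "\<dots> = Z * prl n b A (c # l)" using Cons dZ by (simp add: assocN)
  finally show ?case .
qed simp

lemma prl_comm:
  assumes "\<forall>x\<in>set l1. \<forall>y\<in>set l2. x \<inter> y = {}"
  shows "prl n b A l1 * prl n b A l2 = prl n b A l2 * prl n b A l1"
proof (rule prl_comm_mat[OF _ prl_carrier], intro ballI)
  fix c assume c: "c \<in> set l1"
  have "prl n b A l2 * gossip_mat n b A c = gossip_mat n b A c * prl n b A l2"
    by (rule prl_comm_mat, insert assms c gm_comm, auto)
  thus "gossip_mat n b A c * prl n b A l2 = prl n b A l2 * gossip_mat n b A c" by simp
qed

lemma prl_split:
  assumes "\<forall>x\<in>set l. \<forall>y\<in>set l. P x \<longrightarrow> \<not> P y \<longrightarrow> x \<inter> y = {}"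
  shows "prl n b A l = prl n b A (filter P l) * prl n b A (filter (\<lambda>x. \<not> P x) l)"
  using assms
proof (induction l)
  case (Cons x l)
  hence IH: "prl n b A l = prl n b A (filter P l) * prl n b A (filter (\<lambda>x. \<not> P x) l)" by auto
  show ?case
  proof (cases "P x")
    case True
    have c: "prl n b A (filter (\<lambda>x. \<not> P x) l) * prl n b A [x] = prl n b A [x] * prl n b A (filter (\<lambda>x. \<not> P x) l)"
      by (rule prl_comm, insert Cons.prems True, auto simp: Int_commute)
    have "prl n b A (x # l) = prl n b A (filter P l) * (prl n b A (filter (\<lambda>x. \<not> P x) l) * prl n b A [x])"
      using IH by (simp add: assocN)
    also have "\<dots> = prl n b A (filter P (x # l)) * prl n b A (filter (\<lambda>x. \<not> P x) (x # l))"
      unfolding c using True by (simp add: assocN)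
    finally show ?thesis .
  next
    case False
    then show ?thesis using IH by (simp add: assocN)
  qed
qed simp

lemma cp_final:
  fixes A' B C D :: "real mat"
  assumes c: "A' \<in> carrier_mat N N" "B \<in> carrier_mat N N" "C \<in> carrier_mat N N" "D \<in> carrier_mat N N"
    and AB: "A' * B = B * A'" and AD: "A' * D = D * A'" and CD: "C * D = D * C"
  shows "char_poly (A' * B * C * D) = char_poly (A' * C * B * D)"
proof -
  have d: "dim_row A' = N" "dim_col A' = N" "dim_row B = N" "dim_col B = N" "dim_row C = N" "dim_col C = N" "dim_row D = N" "dim_col D = N"
    using c by auto
  note c = c d
  have "A' * B * C * D = (A' * B) * (C * D)" using c by (simp add: assocN)
  also have "\<dots> = B * (A' * C * D)" unfolding AB using c by (simp add: assocN)
  finally have e1: "A' * B * C * D = B * (A' * C * D)" .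
  have "char_poly (A' * B * C * D) = char_poly ((A' * C * D) * B)"
    unfolding e1 using char_poly_comm[of B N "A' * C * D"] c by simp
  also have "A' * C * D * B = A' * (C * D) * B" using c by (simp add: assocN)
  also have "\<dots> = (A' * D) * C * B" unfolding CD using c by (simp add: assocN)
  also have "\<dots> = D * (A' * C * B)" unfolding AD using c by (simp add: assocN)
  also have "char_poly (D * (A' * C * B)) = char_poly (A' * C * B * D)"
    using char_poly_comm[of D N "A' * C * B"] c by simp
  finally show ?thesis .
qed

lemma path_props: "rtrancl_path r x xs y \<Longrightarrow>
   (\<forall>k<length xs. r ((x#xs)!k) ((x#xs)!Suc k)) \<and> last (x#xs) = y"
proof (induction rule: rtrancl_path.induct)
  case (step x y ys z)
  then show ?case by (auto simp: nth_Cons split: nat.splits)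
qed simp




theorem theorem1:
  fixes n b d s :: nat and E :: "nat \<Rightarrow> nat \<Rightarrow> bool" and H :: "nat set set"
    and Q :: "nat set list" and A :: "nat set \<Rightarrow> nat \<Rightarrow> nat \<Rightarrow> nat \<Rightarrow> nat \<Rightarrow> real"
  assumes "simple_graph n E"
    and "b \<ge> 1"
    and "clique_coverage n E H"
    and "card H = d"
    and "distinct Q" and "set Q = H"
    and "1 \<le> s" and "s \<le> d - 1"
    and "\<not> adjacent_cliques (Q ! (s - 1)) (Q ! s) \<or>
         (adjacent_cliques (Q ! (s - 1)) (Q ! s) \<and>
          \<not> on_cycle_LG H (Q ! (s - 1)) \<and> \<not> on_cycle_LG H (Q ! s))"
  shows "char_poly (gossip_prod n b A Q) = char_poly (gossip_prod n b A (swap_adj s Q))"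
proof -
  note asm = assms
  let ?M = "gossip_mat n b A"
  let ?p = "prl n b A"
  have lenQ: "length Q = d" using asm(4,5,6) distinct_card by fastforce
  have sd: "s < length Q" using asm(7,8) lenQ by linarith
  define \<sigma> where "\<sigma> = Q ! (s - 1)"
  define t where "t = Q ! s"
  define Y where "Y = take (s - 1) Q"
  define X where "X = drop (Suc s) Q"
  have lenY: "length Y = s - 1" using sd unfolding Y_def by simp
  have Qeq: "Q = Y @ \<sigma> # t # X"
  proof -
    have "Q = take (s - 1) Q @ Q ! (s - 1) # drop (Suc (s - 1)) Q"
      using sd by (simp add: id_take_nth_drop)
    also have "Suc (s - 1) = s" using asm(7) by simp
    also have "drop s Q = Q ! s # drop (Suc s) Q" using sd by (simp add: Cons_nth_drop_Suc)
    finally show ?thesis unfolding Y_def \<sigma>_def t_def X_def .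
  qed
  have Seq: "swap_adj s Q = Y @ t # \<sigma> # X"
  proof -
    have s1: "s = Suc (length Y)" using lenY asm(7) by simp
    show ?thesis unfolding swap_adj_def \<sigma>_def[symmetric] t_def[symmetric]
      by (subst Qeq, simp add: s1 list_update_append)
  qed
  have dQ: "distinct (Y @ \<sigma> # t # X)" using asm(5) Qeq by simp
  have inH: "set Y \<subseteq> H" "set X \<subseteq> H" "\<sigma> \<in> H" "t \<in> H" using asm(6) Qeq by auto
  have gQ: "gossip_prod n b A Q = ?p X * (?M t * ?M \<sigma>) * ?p Y"
    by (subst Qeq, simp add: gp_prl prl_append assocN)
  have gS: "gossip_prod n b A (swap_adj s Q) = ?p X * (?M \<sigma> * ?M t) * ?p Y"
    by (simp add: Seq gp_prl prl_append assocN)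
  show ?thesis
  proof (cases "adjacent_cliques \<sigma> t")
    case False
    have "\<sigma> \<noteq> t" using dQ by auto
    hence "\<sigma> \<inter> t = {}" using False unfolding adjacent_cliques_def by auto
    hence "?M t * ?M \<sigma> = ?M \<sigma> * ?M t" by (rule gm_comm[symmetric])
    then show ?thesis unfolding gQ gS by simp
  next
    case adj: True
    have noc: "\<not> on_cycle_LG H \<sigma>" using asm(9) adj unfolding \<sigma>_def t_def by auto
    define R where "R = (\<lambda>x y. x \<in> H \<and> y \<in> H \<and> adjacent_cliques x y \<and> \<not> ((x = \<sigma> \<and> y = t) \<or> (x = t \<and> y = \<sigma>)))"
    define P where "P = (\<lambda>c. R\<^sup>*\<^sup>* \<sigma> c)"
    have adj_sym: "adjacent_cliques y x" if "adjacent_cliques x y" for x y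
      using that by (auto simp: adjacent_cliques_def)
    have st: "\<sigma> \<noteq> t" using dQ by auto
    have tS: "\<not> P t"
    proof
      assume "P t"
      then obtain xs where "rtrancl_path R \<sigma> xs t" unfolding P_def rtranclp_eq_rtrancl_path by blast
      then obtain xs' where pth: "rtrancl_path R \<sigma> xs' t" and dist: "distinct (\<sigma> # xs')"
        by (rule rtrancl_path_distinct)
      from path_props[OF pth] have steps: "\<forall>k<length xs'. R ((\<sigma>#xs')!k) ((\<sigma>#xs')!Suc k)"
        and lst: "last (\<sigma>#xs') = t" by auto
      have ne: "xs' \<noteq> []" using lst st by auto
      have len: "length xs' \<ge> 2"
      proof (rule ccontr)
        assume "\<not> ?thesis"
        with ne obtain y where y: "xs' = [y]" by (cases xs'; cases "tl xs'") auto
        with lst steps have "R \<sigma> t" by auto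
        thus False unfolding R_def by auto
      qed
      let ?cs = "\<sigma> # xs'"
      have cyc: "is_cycle_LG H ?cs"
        unfolding is_cycle_LG_def
      proof (intro conjI allI impI)
        show "3 \<le> length ?cs" using len by simp
        show "distinct ?cs" by (rule dist)
        show "set ?cs \<subseteq> H"
        proof
          fix c assume "c \<in> set ?cs"
          then obtain k where k: "k < length ?cs" "?cs ! k = c" by (metis in_set_conv_nth)
          show "c \<in> H"
          proof (cases k)
            case 0 thus ?thesis using k inH by simp
          next
            case (Suc j) hence "j < length xs'" using k by simp
            with steps have "R (?cs!j) (?cs!Suc j)" by blast
            thus ?thesis using k Suc unfolding R_def by simp
          qed
        qed
        fix k assume k: "k < length ?cs"
        show "adjacent_cliques (?cs ! k) (?cs ! ((k+1) mod length ?cs))"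
        proof (cases "k < length xs'")
          case True
          hence "(k+1) mod length ?cs = Suc k" by simp
          with steps True show ?thesis unfolding R_def by auto
        next
          case False
          hence kk: "k = length xs'" using k by simp
          hence "(k+1) mod length ?cs = 0" by simp
          moreover have "?cs ! k = t" using lst kk last_conv_nth[of ?cs] by simp
          ultimately show ?thesis using adj_sym[OF adj] by simp
        qed
      qed
      hence "on_cycle_LG H \<sigma>" unfolding on_cycle_LG_def by auto
      with noc show False by simp
    qed
    have Disj: "x \<inter> y = {}" if "x \<in> H" "y \<in> H" "P x" "\<not> P y" "\<not> (x = \<sigma> \<and> y = t)" for x y
    proof (rule ccontr)
      assume ne: "x \<inter> y \<noteq> {}"
      have "x \<noteq> y" using that(3,4) by auto
      hence a: "adjacent_cliques x y" using ne unfolding adjacent_cliques_def by auto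
      show False
      proof (cases "x = t \<and> y = \<sigma>")
        case True thus False using that(3) tS by simp
      next
        case False
        hence "R x y" using a that(1,2,5) unfolding R_def by auto
        hence "P y" using that(3) unfolding P_def by (meson rtranclp.rtrancl_into_rtrancl)
        thus False using that(4) by simp
      qed
    qed
    have PS: "P \<sigma>" unfolding P_def by simp
    have nX: "\<sigma> \<notin> set X" "t \<notin> set X" "\<sigma> \<notin> set Y" "t \<notin> set Y" using dQ by auto
    let ?XS = "filter P X" and ?XT = "filter (\<lambda>x. \<not> P x) X"
    let ?YS = "filter P Y" and ?YT = "filter (\<lambda>x. \<not> P x) Y"
    have spX: "?p X = ?p ?XS * ?p ?XT"
      by (rule prl_split, use Disj inH nX in blast)
    have spY: "?p Y = ?p ?YS * ?p ?YT"
      by (rule prl_split, use Disj inH nX in blast)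
    have c1: "?p ?XS * ?p (t # ?XT) = ?p (t # ?XT) * ?p ?XS"
      by (rule prl_comm, use Disj inH nX tS in auto)
    have c2: "?p ?XS * ?p ?YT = ?p ?YT * ?p ?XS"
      by (rule prl_comm, use Disj inH nX in auto)
    have c3: "?p (?YS @ [\<sigma>]) * ?p ?YT = ?p ?YT * ?p (?YS @ [\<sigma>])"
      by (rule prl_comm, use Disj inH nX PS in auto)
    have c4: "?p ?XT * ?p [\<sigma>] = ?p [\<sigma>] * ?p ?XT"
    proof (rule prl_comm, intro ballI)
      fix x y assume "x \<in> set ?XT" "y \<in> set [\<sigma>]"
      thus "x \<inter> y = {}" using Disj[of \<sigma> x] inH nX by (auto simp: P_def)
    qed
    have c5: "?p [t] * ?p ?YS = ?p ?YS * ?p [t]"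
    proof (rule prl_comm, intro ballI)
      fix x y assume "x \<in> set [t]" "y \<in> set ?YS"
      thus "x \<inter> y = {}" using Disj[of y t] inH nX tS by auto
    qed
    have c6: "?p ?XT * ?p ?YS = ?p ?YS * ?p ?XT"
    proof (rule prl_comm, intro ballI)
      fix x y assume "x \<in> set ?XT" "y \<in> set ?YS"
      thus "x \<inter> y = {}" using Disj[of y x] inH nX by auto
    qed
    have c4': "?p ?XT * ?M \<sigma> = ?M \<sigma> * ?p ?XT" using c4 by simp
    have c5': "?M t * ?p ?YS = ?p ?YS * ?M t" using c5 by simp
    have hB: "?p (t # ?XT) = ?p ?XT * ?M t" by simp
    have hC: "?p (?YS @ [\<sigma>]) = ?M \<sigma> * ?p ?YS" by (simp add: prl_append)
    have L: "gossip_prod n b A Q = ?p ?XS * ?p (t # ?XT) * ?p (?YS @ [\<sigma>]) * ?p ?YT"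
      unfolding gQ hB hC spX spY by (simp add: assocN)
    have "gossip_prod n b A (swap_adj s Q) = ?p ?XS * (?p ?XT * ?M \<sigma>) * (?M t * ?p ?YS) * ?p ?YT"
      unfolding gS spX spY by (simp add: assocN)
    also have "\<dots> = ?p ?XS * (?M \<sigma> * ?p ?XT) * (?p ?YS * ?M t) * ?p ?YT"
      by (simp only: c4' c5')
    also have "\<dots> = ?p ?XS * ?M \<sigma> * (?p ?XT * ?p ?YS) * ?M t * ?p ?YT"
      by (simp add: assocN)
    also have "\<dots> = ?p ?XS * ?M \<sigma> * (?p ?YS * ?p ?XT) * ?M t * ?p ?YT"
      by (simp only: c6)
    also have "\<dots> = ?p ?XS * ?p (?YS @ [\<sigma>]) * ?p (t # ?XT) * ?p ?YT"
      unfolding hB hC by (simp add: assocN)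
    finally have Rq: "gossip_prod n b A (swap_adj s Q) = ?p ?XS * ?p (?YS @ [\<sigma>]) * ?p (t # ?XT) * ?p ?YT" .
    show ?thesis unfolding L Rq
      by (rule cp_final[OF prl_carrier prl_carrier prl_carrier prl_carrier c1 c2 c3])
  qed
qed


end
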